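(* Fix $\beta\neq0$. For each of the algorithms RSVI2 and RSQ2 and any fixed $\delta\in(0,1]$, with probability at least $1-\delta/2$, $$\mathcal{R}(K)\lesssim\sum_{k=1}^K\sum_{h=1}^H\Delta_h(s_h^k,a_h^k;\tau^k_{h-1})+\frac{e^{|\beta|H}-1}{|\beta|}H\log(\log K/\delta).$$
   Context: Episodic finite-horizon tabular MDP with $|\mathcal{S}|=S$, $|\mathcal{A}|=A$, horizon $H$, $K$ episodes, transitions $\mathcal{P}_h(\cdot\mid s,a)$, deterministic rewards $r_h\in[0,1]$, fixed initial state $s_1$. For policy $\pi=(\pi_h)$ and $\beta\ne0$: $V_h^\pi(s)=\frac1\beta\log\mathbb{E}[e^{\beta\sum_{i=h}^H r_i(s_i,\pi_i(s_i))}\mid s_h=s]$, $Q_h^\pi(s,a)$ likewise with $a_h=a$; $V^*_h=\sup_\pi V^\pi_h$ attained by $\pi^*$, $Q^*_h=Q^{\pi^*}_h$. $\pi^k$ is the (greedy) policy the algorithm executes in episode $k$, $\tau^k=((s_h^k,a_h^k))_{h\in[H]}$ is the sampled trajectory of episode $k$, $\tau^k_{h-1}$ its first $h-1$ pairs. Regret $\mathcal{R}(K)=\sum_k(V_1^*-V_1^{\pi^k})(s_1)$. For $\tau_{h-1}=((s_j,a_j))_{j<h}$, $R(\tau_{h-1})=\sum_{j<h}r_j(s_j,a_j)$ (zero if $h=1$), and the cascaded gap is $\Delta_h(s,a;\tau_{h-1})=\psi_\beta e^{\beta R(\tau_{h-1})}[e^{\beta V^*_h(s)}-e^{\beta Q^*_h(s,a)}]$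 with $\psi_\beta=1/\beta$ for $\beta>0$, $e^{-\beta H}/\beta$ for $\beta<0$. $\lesssim$ hides universal constants. RSVI2 (inputs $K,\delta,\beta$): initialize $Q_h,V_h\leftarrow H-h+1$, $w_h,N_h\leftarrow0$ for $h\in[H+1]$; in episode $k$, for $h=H,\dots,1$ and $(s,a)$ with $N_h(s,a)\ge1$: $w_h(s,a)=\frac{1}{N_h(s,a)}\sum_{i<k}\mathbb{1}\{(s_h^i,a_h^i)=(s,a)\}e^{\beta[r_h(s,a)+V_{h+1}(s^i_{h+1})]}$, $b_h=c|e^{\beta(H-h+1)}-1|\sqrt{S\log(2SAHK/\delta)/N_h(s,a)}$, $G_h=\min\{e^{\beta(H-h+1)},w_h+b_h\}$ ($\beta>0$) or $\max\{e^{\beta(H-h+1)},w_h-b_h\}$ ($\beta<0$), $Q_h=\frac1\beta\log G_h$, $V_h(s)=\max_{a'}Q_h(s,a')$; then act $a_h=\arg\max_aQ_h(s_h,a)$, $h=1..H$, incrementing $N_h(s_h,a_h)$. RSQ2 (inputs $K,\delta,\beta$): initialize $Q_h,V_h\leftarrow H-h+1$ ($\beta>0$) or $0$ ($\beta<0$), $V_{H+1}\equiv0$, $N_h\leftarrow0$, $\alpha_t=\frac{H+1}{H+t}$, $G_h=e^{\beta Q_h}$; each episode for $h=1..H$: act $a_h=\arg\max Q_h(s_h,\cdot)$, observe $r_h,s_{h+1}$, $t=N_h(s_h,a_h)\leftarrow N_h(s_h,a_h)+1$, $w=(1-\alpha_t)G_h(s_h,a_h)+\alpha_te^{\beta[r_h(s_h,a_h)+V_{h+1}(s_{h+1})]}$,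 $b_{h,t}=c|e^{\beta(H-h+1)}-1|\sqrt{H\log(2SAHK/\delta)/t}$, $G_h(s_h,a_h)=\min\{e^{\beta(H-h+1)},w+\alpha_tb_{h,t}\}$ ($\beta>0$) or $\max\{e^{\beta(H-h+1)},w-\alpha_tb_{h,t}\}$ ($\beta<0$), $Q_h=\frac1\beta\log G_h$, $V_h(s_h)=\max Q_h(s_h,\cdot)$. Here $c>0$ is an appropriate universal constant. *)

theory Defs
  imports "HOL-Probability.Probability"
begin

text \<open>Episodic tabular MDP. States are 0..<nS, actions 0..<nA, steps 1..hor.
  Trajectories are lists of (state, action) pairs; element h-1 is step h.\<close>

record mdp =
  nS :: nat
  nA :: nat
  hor :: nat
  trans :: "nat \<Rightarrow> nat \<Rightarrow> nat \<Rightarrow> nat pmf"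
  rew :: "nat \<Rightarrow> nat \<Rightarrow> nat \<Rightarrow> real"
  init :: nat

definition valid_mdp :: "mdp \<Rightarrow> bool" where
  "valid_mdp M \<longleftrightarrow> nS M \<ge> 1 \<and> nA M \<ge> 1 \<and> hor M \<ge> 1 \<and> init M < nS M \<and>
     (\<forall>h s a. 0 \<le> rew M h s a \<and> rew M h s a \<le> 1) \<and>
     (\<forall>h s a. s < nS M \<longrightarrow> a < nA M \<longrightarrow> set_pmf (trans M h s a) \<subseteq> {..<nS M})"

type_synonym policy = "nat \<Rightarrow> nat \<Rightarrow> nat"
type_synonym traj = "(nat \<times> nat) list"
type_synonym hist = "traj list"

definition policies :: "mdp \<Rightarrow> policy set" where
  "policies M = {\<pi>. \<forall>h s. \<pi> h s < nA M}"

text \<open>Wn M beta pi n h s = E[exp(beta * sum of the n rewards from step h on) | s_h = s].\<close>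
primrec Wn :: "mdp \<Rightarrow> real \<Rightarrow> policy \<Rightarrow> nat \<Rightarrow> nat \<Rightarrow> nat \<Rightarrow> real" where
  "Wn M \<beta> \<pi> 0 h s = 1"
| "Wn M \<beta> \<pi> (Suc n) h s = exp (\<beta> * rew M h s (\<pi> h s)) *
     measure_pmf.expectation (trans M h s (\<pi> h s)) (\<lambda>s'. Wn M \<beta> \<pi> n (Suc h) s')"

definition Vpi :: "mdp \<Rightarrow> real \<Rightarrow> policy \<Rightarrow> nat \<Rightarrow> nat \<Rightarrow> real" where
  "Vpi M \<beta> \<pi> h s = ln (Wn M \<beta> \<pi> (hor M + 1 - h) h s) / \<beta>"

definition Qpi :: "mdp \<Rightarrow> real \<Rightarrow> policy \<Rightarrow> nat \<Rightarrow> nat \<Rightarrow> nat \<Rightarrow> real" where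
  "Qpi M \<beta> \<pi> h s a = ln (exp (\<beta> * rew M h s a) *
     measure_pmf.expectation (trans M h s a) (\<lambda>s'. Wn M \<beta> \<pi> (hor M - h) (Suc h) s')) / \<beta>"

definition Vstar :: "mdp \<Rightarrow> real \<Rightarrow> nat \<Rightarrow> nat \<Rightarrow> real" where
  "Vstar M \<beta> h s = (SUP \<pi>\<in>policies M. Vpi M \<beta> \<pi> h s)"

definition pistar :: "mdp \<Rightarrow> real \<Rightarrow> policy" where
  "pistar M \<beta> = (SOME \<pi>. \<pi> \<in> policies M \<and>
     (\<forall>h\<in>{1..hor M}. \<forall>s<nS M. Vpi M \<beta> \<pi> h s = Vstar M \<beta> h s))"

definition Qstar :: "mdp \<Rightarrow> real \<Rightarrow> nat \<Rightarrow> nat \<Rightarrow> nat \<Rightarrow> real" where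
  "Qstar M \<beta> h s a = Qpi M \<beta> (pistar M \<beta>) h s a"

definition psi :: "real \<Rightarrow> nat \<Rightarrow> real" where
  "psi \<beta> H = (if \<beta> > 0 then 1 / \<beta> else exp (- \<beta> * real H) / \<beta>)"

definition cumrew :: "mdp \<Rightarrow> traj \<Rightarrow> real" where
  "cumrew M \<tau> = (\<Sum>j\<in>{1..length \<tau>}. rew M j (fst (\<tau> ! (j - 1))) (snd (\<tau> ! (j - 1))))"

definition gap :: "mdp \<Rightarrow> real \<Rightarrow> nat \<Rightarrow> nat \<Rightarrow> nat \<Rightarrow> traj \<Rightarrow> real" where
  "gap M \<beta> h s a \<tau> = psi \<beta> (hor M) * exp (\<beta> * cumrew M \<tau>) *
     (exp (\<beta> * Vstar M \<beta> h s) - exp (\<beta> * Qstar M \<beta> h s a))"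

primrec gen_traj :: "mdp \<Rightarrow> policy \<Rightarrow> nat \<Rightarrow> nat \<Rightarrow> nat \<Rightarrow> traj pmf" where
  "gen_traj M \<pi> 0 h s = return_pmf []"
| "gen_traj M \<pi> (Suc n) h s = bind_pmf (trans M h s (\<pi> h s))
     (\<lambda>s'. map_pmf (\<lambda>rest. (s, \<pi> h s) # rest) (gen_traj M \<pi> n (Suc h) s'))"

definition traj_pmf :: "mdp \<Rightarrow> policy \<Rightarrow> traj pmf" where
  "traj_pmf M \<pi> = gen_traj M \<pi> (hor M) 1 (init M)"

text \<open>An algorithm maps the history of previous episodes (oldest first) to the policy
  executed in the next episode. hist_pmf gives the law of the first k episodes.\<close>
primrec hist_pmf :: "mdp \<Rightarrow> (hist \<Rightarrow> policy) \<Rightarrow> nat \<Rightarrow> hist pmf" where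
  "hist_pmf M alg 0 = return_pmf []"
| "hist_pmf M alg (Suc k) = bind_pmf (hist_pmf M alg k)
     (\<lambda>hs. map_pmf (\<lambda>\<tau>. hs @ [\<tau>]) (traj_pmf M (alg hs)))"

definition regret :: "mdp \<Rightarrow> real \<Rightarrow> (hist \<Rightarrow> policy) \<Rightarrow> nat \<Rightarrow> hist \<Rightarrow> real" where
  "regret M \<beta> alg K hs =
     (\<Sum>k<K. Vstar M \<beta> 1 (init M) - Vpi M \<beta> (alg (take k hs)) 1 (init M))"

definition gapsum :: "mdp \<Rightarrow> real \<Rightarrow> nat \<Rightarrow> hist \<Rightarrow> real" where
  "gapsum M \<beta> K hs = (\<Sum>k<K. \<Sum>h\<in>{1..hor M}.
     gap M \<beta> h (fst (hs ! k ! (h - 1))) (snd (hs ! k ! (h - 1))) (take (h - 1) (hs ! k)))"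

definition argmax_sel :: "nat \<Rightarrow> ((nat \<Rightarrow> real) \<Rightarrow> nat) \<Rightarrow> bool" where
  "argmax_sel A sel \<longleftrightarrow> (\<forall>f. sel f < A \<and> (\<forall>a<A. f a \<le> f (sel f)))"

definition visits :: "hist \<Rightarrow> nat \<Rightarrow> nat \<Rightarrow> nat \<Rightarrow> nat" where
  "visits hs h s a = card {i. i < length hs \<and> hs ! i ! (h - 1) = (s, a)}"

definition rsvi_Qh :: "mdp \<Rightarrow> real \<Rightarrow> real \<Rightarrow> nat \<Rightarrow> real \<Rightarrow> hist \<Rightarrow> nat \<Rightarrow> (nat \<Rightarrow> real)
    \<Rightarrow> nat \<Rightarrow> nat \<Rightarrow> real" where
  "rsvi_Qh M \<beta> c K \<delta> hs h Vnext s a =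
    (let n = visits hs h s a;
         Hh = real (hor M - h + 1);
         w = (\<Sum>i\<in>{i. i < length hs \<and> hs ! i ! (h - 1) = (s, a)}.
                exp (\<beta> * (rew M h s a + Vnext (fst (hs ! i ! h))))) / real n;
         b = c * \<bar>exp (\<beta> * Hh) - 1\<bar> *
             sqrt (real (nS M) * ln (2 * real (nS M) * real (nA M) * real (hor M) * real K / \<delta>) / real n);
         G = (if \<beta> > 0 then min (exp (\<beta> * Hh)) (w + b) else max (exp (\<beta> * Hh)) (w - b))
     in if n \<ge> 1 then ln G / \<beta> else Hh)"

text \<open>rsvi_V ... hs m is V_{H+1-m} computed at the start of the episode after history hs.\<close>
primrec rsvi_V :: "mdp \<Rightarrow> real \<Rightarrow> real \<Rightarrow> nat \<Rightarrow> real \<Rightarrow> hist \<Rightarrow> nat \<Rightarrow> nat \<Rightarrow> real" where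
  "rsvi_V M \<beta> c K \<delta> hs 0 = (\<lambda>s. 0)"
| "rsvi_V M \<beta> c K \<delta> hs (Suc m) = (\<lambda>s. Max ((\<lambda>a. rsvi_Qh M \<beta> c K \<delta> hs (hor M - m)
       (rsvi_V M \<beta> c K \<delta> hs m) s a) ` {..<nA M}))"

definition rsvi_Q :: "mdp \<Rightarrow> real \<Rightarrow> real \<Rightarrow> nat \<Rightarrow> real \<Rightarrow> hist \<Rightarrow> nat \<Rightarrow> nat \<Rightarrow> nat \<Rightarrow> real" where
  "rsvi_Q M \<beta> c K \<delta> hs h s a = rsvi_Qh M \<beta> c K \<delta> hs h (rsvi_V M \<beta> c K \<delta> hs (hor M - h)) s a"

definition RSVI2 :: "((nat \<Rightarrow> real) \<Rightarrow> nat) \<Rightarrow> mdp \<Rightarrow> real \<Rightarrow> real \<Rightarrow> nat \<Rightarrow> real \<Rightarrow> hist \<Rightarrow> policy" where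
  "RSVI2 sel M \<beta> c K \<delta> hs = (\<lambda>h s. sel (\<lambda>a. rsvi_Q M \<beta> c K \<delta> hs h s a))"

type_synonym rsq_state = "(nat \<Rightarrow> nat \<Rightarrow> nat \<Rightarrow> real) \<times> (nat \<Rightarrow> nat \<Rightarrow> real) \<times> (nat \<Rightarrow> nat \<Rightarrow> nat \<Rightarrow> nat)"

definition rsq_q0 :: "mdp \<Rightarrow> real \<Rightarrow> nat \<Rightarrow> real" where
  "rsq_q0 M \<beta> h = (if \<beta> > 0 then real (hor M + 1 - h) else 0)"

definition rsq_init :: "mdp \<Rightarrow> real \<Rightarrow> rsq_state" where
  "rsq_init M \<beta> = ((\<lambda>h s a. exp (\<beta> * rsq_q0 M \<beta> h)), (\<lambda>h s. rsq_q0 M \<beta> h), (\<lambda>h s a. 0))"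

definition rsq_step :: "mdp \<Rightarrow> real \<Rightarrow> real \<Rightarrow> nat \<Rightarrow> real \<Rightarrow> rsq_state \<Rightarrow> nat \<Rightarrow> nat \<Rightarrow> nat \<Rightarrow> nat
    \<Rightarrow> rsq_state" where
  "rsq_step M \<beta> c K \<delta> st h s a s' =
    (case st of (G, V, N) \<Rightarrow>
      let t = N h s a + 1;
          \<alpha> = real (hor M + 1) / real (hor M + t);
          w = (1 - \<alpha>) * G h s a + \<alpha> * exp (\<beta> * (rew M h s a + V (Suc h) s'));
          Hh = real (hor M - h + 1);
          b = c * \<bar>exp (\<beta> * Hh) - 1\<bar> *
              sqrt (real (hor M) * ln (2 * real (nS M) * real (nA M) * real (hor M) * real K / \<delta>) / real t);
          g = (if \<beta> > 0 then min (exp (\<beta> * Hh)) (w + \<alpha> * b) else max (exp (\<beta> * Hh)) (w - \<alpha> * b));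
          G' = G(h := (G h)(s := (G h s)(a := g)));
          N' = N(h := (N h)(s := (N h s)(a := t)));
          V' = V(h := (V h)(s := Max ((\<lambda>a'. ln (G' h s a') / \<beta>) ` {..<nA M})))
      in (G', V', N'))"

definition rsq_episode :: "mdp \<Rightarrow> real \<Rightarrow> real \<Rightarrow> nat \<Rightarrow> real \<Rightarrow> traj \<Rightarrow> rsq_state \<Rightarrow> rsq_state" where
  "rsq_episode M \<beta> c K \<delta> \<tau> st0 = fold (\<lambda>h st. rsq_step M \<beta> c K \<delta> st h
       (fst (\<tau> ! (h - 1))) (snd (\<tau> ! (h - 1)))
       (if h < hor M then fst (\<tau> ! h) else init M)) [1..<hor M + 1] st0"

definition RSQ2 :: "((nat \<Rightarrow> real) \<Rightarrow> nat) \<Rightarrow> mdp \<Rightarrow> real \<Rightarrow> real \<Rightarrow> nat \<Rightarrow> real \<Rightarrow> hist \<Rightarrow> policy" where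
  "RSQ2 sel M \<beta> c K \<delta> hs =
    (case fold (rsq_episode M \<beta> c K \<delta>) hs (rsq_init M \<beta>) of (G, V, N) \<Rightarrow>
       (\<lambda>h s. sel (\<lambda>a. ln (G h s a) / \<beta>)))"

definition regret_bound_event :: "mdp \<Rightarrow> real \<Rightarrow> real \<Rightarrow> nat \<Rightarrow> real \<Rightarrow> (hist \<Rightarrow> policy) \<Rightarrow> hist set" where
  "regret_bound_event M \<beta> C K \<delta> alg = {hs. regret M \<beta> alg K hs \<le>
     C * (gapsum M \<beta> K hs + (exp (\<bar>\<beta>\<bar> * real (hor M)) - 1) / \<bar>\<beta>\<bar> * real (hor M) * ln (ln (real K) / \<delta>))}"

end

theory Submission
  imports Defs
begin

lemma pmf_int_bdd:
  fixes f :: "'a \<Rightarrow> real"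
  assumes "\<And>x. \<bar>f x\<bar> \<le> B"
  shows "integrable (measure_pmf p) f"
  by (rule measure_pmf.integrable_const_bound[where B=B]) (use assms in auto)

lemma pmf_int_cong:
  fixes f g :: "'a \<Rightarrow> real"
  assumes "\<And>x. x \<in> set_pmf p \<Longrightarrow> f x = g x"
  shows "measure_pmf.expectation p f = measure_pmf.expectation p g"
  by (rule integral_cong_AE) (use assms in \<open>auto simp: AE_measure_pmf_iff\<close>)

lemma pmf_int_bind_global:
  fixes f :: "'b \<Rightarrow> real"
  assumes "\<And>x. \<bar>f x\<bar> \<le> B"
  shows "measure_pmf.expectation (bind_pmf p q) f =
         measure_pmf.expectation p (\<lambda>x. measure_pmf.expectation (q x) f)"
  unfolding measure_pmf_bind
  by (rule integral_bind[where K="count_space UNIV" and B=B and B'=1])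
     (use assms in \<open>auto simp: measure_pmf.emeasure_space_1 measure_pmf_in_subprob_algebra intro: measure_pmf.finite_measure\<close>)

lemma exp_bdd:
  fixes y :: real
  assumes "\<bar>y\<bar> \<le> B"
  shows "\<bar>exp (\<beta> * y)\<bar> \<le> exp (\<bar>\<beta>\<bar> * B)" and "exp (- (\<bar>\<beta>\<bar> * B)) \<le> exp (\<beta> * y)"
proof -
  have "\<bar>\<beta> * y\<bar> \<le> \<bar>\<beta>\<bar> * B"
    unfolding abs_mult by (rule mult_left_mono[OF assms]) simp
  then have "\<beta> * y \<le> \<bar>\<beta>\<bar> * B" "- (\<bar>\<beta>\<bar> * B) \<le> \<beta> * y" by linarith+
  then show "\<bar>exp (\<beta> * y)\<bar> \<le> exp (\<bar>\<beta>\<bar> * B)" and "exp (- (\<bar>\<beta>\<bar> * B)) \<le> exp (\<beta> * y)"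
    by simp_all
qed

lemma pmf_exp_pos:
  fixes f :: "'a \<Rightarrow> real"
  assumes "\<And>x. \<bar>f x\<bar> \<le> B"
  shows "0 < measure_pmf.expectation p (\<lambda>x. exp (\<beta> * f x))"
proof -
  have b: "\<bar>exp (\<beta> * f x)\<bar> \<le> exp (\<bar>\<beta>\<bar> * B)" for x
    by (rule exp_bdd[OF assms])
  have l: "exp (- (\<bar>\<beta>\<bar> * B)) \<le> exp (\<beta> * f x)" for x
    by (rule exp_bdd[OF assms])
  have "exp (- (\<bar>\<beta>\<bar> * B)) \<le> measure_pmf.expectation p (\<lambda>x. exp (\<beta> * f x))"
    by (rule measure_pmf.integral_ge_const) (use pmf_int_bdd[OF b] l in auto)
  then show ?thesis using exp_gt_zero order_less_le_trans by blast
qed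

lemma pmf_exp_mono:
  fixes f g :: "'a \<Rightarrow> real"
  assumes "\<And>x. \<bar>f x\<bar> \<le> B" "\<And>x. \<bar>g x\<bar> \<le> B" "\<And>x. x \<in> set_pmf p \<Longrightarrow> f x \<le> g x"
    and "\<beta> \<noteq> 0"
  shows "ln (measure_pmf.expectation p (\<lambda>x. exp (\<beta> * f x))) / \<beta>
       \<le> ln (measure_pmf.expectation p (\<lambda>x. exp (\<beta> * g x))) / \<beta>"
proof -
  have bf: "\<bar>exp (\<beta> * f x)\<bar> \<le> exp (\<bar>\<beta>\<bar> * B)" for x
    by (rule exp_bdd[OF assms(1)])
  have bg: "\<bar>exp (\<beta> * g x)\<bar> \<le> exp (\<bar>\<beta>\<bar> * B)" for x
    by (rule exp_bdd[OF assms(2)])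
  note If = pmf_int_bdd[OF bf] and Ig = pmf_int_bdd[OF bg]
  have pf: "0 < measure_pmf.expectation p (\<lambda>x. exp (\<beta> * f x))" by (rule pmf_exp_pos[OF assms(1)])
  have pg: "0 < measure_pmf.expectation p (\<lambda>x. exp (\<beta> * g x))" by (rule pmf_exp_pos[OF assms(2)])
  show ?thesis
  proof (cases "\<beta> > 0")
    case True
    have "measure_pmf.expectation p (\<lambda>x. exp (\<beta> * f x)) \<le> measure_pmf.expectation p (\<lambda>x. exp (\<beta> * g x))"
      by (rule integral_mono_AE[OF If Ig]) (use assms(3) True in \<open>auto simp: AE_measure_pmf_iff\<close>)
    then have "ln (measure_pmf.expectation p (\<lambda>x. exp (\<beta> * f x))) \<le> ln (measure_pmf.expectation p (\<lambda>x. exp (\<beta> * g x)))"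
      using pf pg by simp
    then show ?thesis using True by (simp add: divide_right_mono)
  next
    case False
    then have neg: "\<beta> < 0" using assms(4) by simp
    have "measure_pmf.expectation p (\<lambda>x. exp (\<beta> * g x)) \<le> measure_pmf.expectation p (\<lambda>x. exp (\<beta> * f x))"
      by (rule integral_mono_AE[OF Ig If]) (use assms(3) neg in \<open>auto simp: AE_measure_pmf_iff mult_left_mono_neg\<close>)
    then have "ln (measure_pmf.expectation p (\<lambda>x. exp (\<beta> * g x))) \<le> ln (measure_pmf.expectation p (\<lambda>x. exp (\<beta> * f x)))"
      using pf pg by simp
    then show ?thesis using neg by (simp add: divide_right_mono_neg)
  qed
qed

lemma pmf_exp_bounds:
  fixes f :: "'a \<Rightarrow> real"
  assumes "\<And>x. lo \<le> f x" "\<And>x. f x \<le> hi" "\<beta> \<noteq> 0"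
  shows "lo \<le> ln (measure_pmf.expectation p (\<lambda>x. exp (\<beta> * f x))) / \<beta>"
    and "ln (measure_pmf.expectation p (\<lambda>x. exp (\<beta> * f x))) / \<beta> \<le> hi"
proof -
  define B where "B = \<bar>lo\<bar> + \<bar>hi\<bar>"
  have b: "\<bar>f x\<bar> \<le> B" for x using assms(1,2)[of x] unfolding B_def by linarith
  have bl: "\<bar>(\<lambda>_. lo) x\<bar> \<le> B" for x :: 'a unfolding B_def by simp
  have bh: "\<bar>(\<lambda>_. hi) x\<bar> \<le> B" for x :: 'a unfolding B_def by simp
  have "ln (measure_pmf.expectation p (\<lambda>x. exp (\<beta> * (\<lambda>_. lo) x))) / \<beta>
       \<le> ln (measure_pmf.expectation p (\<lambda>x. exp (\<beta> * f x))) / \<beta>"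
    by (rule pmf_exp_mono[OF bl b _ assms(3)]) (use assms in auto)
  then show "lo \<le> ln (measure_pmf.expectation p (\<lambda>x. exp (\<beta> * f x))) / \<beta>"
    using assms(3) by simp
  have "ln (measure_pmf.expectation p (\<lambda>x. exp (\<beta> * f x))) / \<beta>
       \<le> ln (measure_pmf.expectation p (\<lambda>x. exp (\<beta> * (\<lambda>_. hi) x))) / \<beta>"
    by (rule pmf_exp_mono[OF b bh _ assms(3)]) (use assms in auto)
  then show "ln (measure_pmf.expectation p (\<lambda>x. exp (\<beta> * f x))) / \<beta> \<le> hi"
    using assms(3) by simp
qed

section \<open>Optimal values\<close>

definition Qv :: "mdp \<Rightarrow> real \<Rightarrow> (nat \<Rightarrow> real) \<Rightarrow> nat \<Rightarrow> nat \<Rightarrow> nat \<Rightarrow> real" where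
  "Qv M \<beta> V h s a = rew M h s a +
     ln (measure_pmf.expectation (trans M h s a) (\<lambda>s'. exp (\<beta> * V s'))) / \<beta>"

primrec Vn :: "mdp \<Rightarrow> real \<Rightarrow> nat \<Rightarrow> nat \<Rightarrow> nat \<Rightarrow> real" where
  "Vn M \<beta> 0 h s = 0"
| "Vn M \<beta> (Suc n) h s = Max ((\<lambda>a. Qv M \<beta> (Vn M \<beta> n (Suc h)) h s a) ` {..<nA M})"

lemma valid_rew: "valid_mdp M \<Longrightarrow> 0 \<le> rew M h s a \<and> rew M h s a \<le> 1"
  unfolding valid_mdp_def by blast

lemma valid_trans: "valid_mdp M \<Longrightarrow> s < nS M \<Longrightarrow> a < nA M \<Longrightarrow> s' \<in> set_pmf (trans M h s a) \<Longrightarrow> s' < nS M"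
  unfolding valid_mdp_def by blast

lemma Qv_bounds:
  assumes "valid_mdp M" "\<beta> \<noteq> 0" "\<And>x. 0 \<le> V x" "\<And>x. V x \<le> n"
  shows "0 \<le> Qv M \<beta> V h s a \<and> Qv M \<beta> V h s a \<le> real n + 1"
  using pmf_exp_bounds[of 0 V n \<beta> "trans M h s a"] assms valid_rew[OF assms(1), of h s a]
  unfolding Qv_def by auto

lemma exp_Qv:
  assumes "\<And>x. \<bar>V x\<bar> \<le> B"
  shows "exp (\<beta> * Qv M \<beta> V h s a) =
     exp (\<beta> * rew M h s a) * measure_pmf.expectation (trans M h s a) (\<lambda>s'. exp (\<beta> * V s'))"
proof (cases "\<beta> = 0")
  case True
  then show ?thesis by simp
next
  case False
  have pos: "0 < measure_pmf.expectation (trans M h s a) (\<lambda>s'. exp (\<beta> * V s'))"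
    by (rule pmf_exp_pos[OF assms])
  have "\<beta> * Qv M \<beta> V h s a = \<beta> * rew M h s a + ln (measure_pmf.expectation (trans M h s a) (\<lambda>s'. exp (\<beta> * V s')))"
    unfolding Qv_def using False by (simp add: field_simps)
  then show ?thesis using pos by (simp add: exp_add)
qed

lemma nA_pos: "valid_mdp M \<Longrightarrow> {..<nA M} \<noteq> {}"
proof -
  assume "valid_mdp M"
  then have "0 < nA M" unfolding valid_mdp_def by auto
  then show ?thesis by auto
qed

lemma Vn_bounds:
  assumes "valid_mdp M" "\<beta> \<noteq> 0"
  shows "0 \<le> Vn M \<beta> n h s \<and> Vn M \<beta> n h s \<le> real n"
proof (induction n arbitrary: h s)
  case 0
  then show ?case by simp
next
  case (Suc n)
  have "Max ((\<lambda>a. Qv M \<beta> (Vn M \<beta> n (Suc h)) h s a) ` {..<nA M}) \<in> (\<lambda>a. Qv M \<beta> (Vn M \<beta> n (Suc h)) h s a) ` {..<nA M}"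
    by (rule Max_in) (use nA_pos[OF assms(1)] in auto)
  then obtain a where "Vn M \<beta> (Suc n) h s = Qv M \<beta> (Vn M \<beta> n (Suc h)) h s a" by auto
  moreover have "0 \<le> Qv M \<beta> (Vn M \<beta> n (Suc h)) h s a \<and> Qv M \<beta> (Vn M \<beta> n (Suc h)) h s a \<le> real n + 1"
    by (rule Qv_bounds) (use assms Suc in auto)
  ultimately show ?case by simp
qed

lemma Vn_abs: "valid_mdp M \<Longrightarrow> \<beta> \<noteq> 0 \<Longrightarrow> \<bar>Vn M \<beta> n h s\<bar> \<le> real n"
  using Vn_bounds[of M \<beta> n h s] by auto

lemma Qv_le_Vn: "a < nA M \<Longrightarrow> Qv M \<beta> (Vn M \<beta> n (Suc h)) h s a \<le> Vn M \<beta> (Suc n) h s"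
  by simp

definition vp :: "mdp \<Rightarrow> real \<Rightarrow> policy \<Rightarrow> nat \<Rightarrow> nat \<Rightarrow> nat \<Rightarrow> real" where
  "vp M \<beta> \<pi> n h s = ln (Wn M \<beta> \<pi> n h s) / \<beta>"

lemma Wn_vp:
  assumes "valid_mdp M" "\<beta> \<noteq> 0"
  shows "Wn M \<beta> \<pi> n h s = exp (\<beta> * vp M \<beta> \<pi> n h s) \<and> 0 \<le> vp M \<beta> \<pi> n h s \<and> vp M \<beta> \<pi> n h s \<le> real n"
proof (induction n arbitrary: h s)
  case 0
  then show ?case by (simp add: vp_def)
next
  case (Suc n)
  have eq: "(\<lambda>s'. Wn M \<beta> \<pi> n (Suc h) s') = (\<lambda>s'. exp (\<beta> * vp M \<beta> \<pi> n (Suc h) s'))"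
    using Suc by auto
  have b: "\<bar>vp M \<beta> \<pi> n (Suc h) x\<bar> \<le> real n" for x using Suc[of "Suc h" x] by auto
  have W: "Wn M \<beta> \<pi> (Suc n) h s = exp (\<beta> * Qv M \<beta> (vp M \<beta> \<pi> n (Suc h)) h s (\<pi> h s))"
    by (simp only: Wn.simps eq exp_Qv[OF b])
  have "vp M \<beta> \<pi> (Suc n) h s = Qv M \<beta> (vp M \<beta> \<pi> n (Suc h)) h s (\<pi> h s)"
    unfolding vp_def W using assms(2) by simp
  moreover have "0 \<le> Qv M \<beta> (vp M \<beta> \<pi> n (Suc h)) h s (\<pi> h s) \<and> Qv M \<beta> (vp M \<beta> \<pi> n (Suc h)) h s (\<pi> h s) \<le> real n + 1"
    by (rule Qv_bounds) (use assms Suc in auto)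
  ultimately show ?case using W by simp
qed

lemma vp_Suc:
  assumes "valid_mdp M" "\<beta> \<noteq> 0"
  shows "vp M \<beta> \<pi> (Suc n) h s = Qv M \<beta> (vp M \<beta> \<pi> n (Suc h)) h s (\<pi> h s)"
proof -
  have eq: "(\<lambda>s'. Wn M \<beta> \<pi> n (Suc h) s') = (\<lambda>s'. exp (\<beta> * vp M \<beta> \<pi> n (Suc h) s'))"
    using Wn_vp[OF assms] by auto
  have b: "\<bar>vp M \<beta> \<pi> n (Suc h) x\<bar> \<le> real n" for x using Wn_vp[OF assms, of \<pi> n "Suc h" x] by auto
  have W: "Wn M \<beta> \<pi> (Suc n) h s = exp (\<beta> * Qv M \<beta> (vp M \<beta> \<pi> n (Suc h)) h s (\<pi> h s))"
    by (simp only: Wn.simps eq exp_Qv[OF b])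
  show ?thesis unfolding vp_def W using assms(2) by simp
qed

lemma vp_le_Vn:
  assumes "valid_mdp M" "\<beta> \<noteq> 0" "\<pi> \<in> policies M"
  shows "vp M \<beta> \<pi> n h s \<le> Vn M \<beta> n h s"
proof (induction n arbitrary: h s)
  case 0
  then show ?case by (simp add: vp_def)
next
  case (Suc n)
  have a: "\<pi> h s < nA M" using assms(3) unfolding policies_def by auto
  have b1: "\<bar>vp M \<beta> \<pi> n (Suc h) x\<bar> \<le> real n" for x using Wn_vp[OF assms(1,2), of \<pi> n "Suc h" x] by auto
  have "ln (measure_pmf.expectation (trans M h s (\<pi> h s)) (\<lambda>x. exp (\<beta> * vp M \<beta> \<pi> n (Suc h) x))) / \<beta>
     \<le> ln (measure_pmf.expectation (trans M h s (\<pi> h s)) (\<lambda>x. exp (\<beta> * Vn M \<beta> n (Suc h) x))) / \<beta>"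
    by (rule pmf_exp_mono[OF b1 Vn_abs[OF assms(1,2)] Suc assms(2)])
  then have "Qv M \<beta> (vp M \<beta> \<pi> n (Suc h)) h s (\<pi> h s) \<le> Qv M \<beta> (Vn M \<beta> n (Suc h)) h s (\<pi> h s)"
    unfolding Qv_def by simp
  also have "\<dots> \<le> Vn M \<beta> (Suc n) h s" by (rule Qv_le_Vn[OF a])
  finally show ?case unfolding vp_Suc[OF assms(1,2)] .
qed

definition pi_opt :: "mdp \<Rightarrow> real \<Rightarrow> policy" where
  "pi_opt M \<beta> h s = (SOME a. a < nA M \<and>
     Qv M \<beta> (Vn M \<beta> (hor M - h) (Suc h)) h s a = Vn M \<beta> (Suc (hor M - h)) h s)"

lemma pi_opt_prop:
  assumes "valid_mdp M"
  shows "pi_opt M \<beta> h s < nA M \<and>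
     Qv M \<beta> (Vn M \<beta> (hor M - h) (Suc h)) h s (pi_opt M \<beta> h s) = Vn M \<beta> (Suc (hor M - h)) h s"
proof -
  let ?f = "\<lambda>a. Qv M \<beta> (Vn M \<beta> (hor M - h) (Suc h)) h s a"
  have "Max (?f ` {..<nA M}) \<in> ?f ` {..<nA M}"
    by (rule Max_in) (use nA_pos[OF assms(1)] in auto)
  then have "\<exists>a. a < nA M \<and> ?f a = Vn M \<beta> (Suc (hor M - h)) h s" by auto
  then show ?thesis unfolding pi_opt_def by (rule someI_ex)
qed

lemma pi_opt_pol: "valid_mdp M \<Longrightarrow> pi_opt M \<beta> \<in> policies M"
  using pi_opt_prop unfolding policies_def by blast

lemma vp_opt:
  assumes "valid_mdp M" "\<beta> \<noteq> 0"
  shows "n + h = hor M + 1 \<Longrightarrow> vp M \<beta> (pi_opt M \<beta>) n h s = Vn M \<beta> n h s"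
proof (induction n arbitrary: h s)
  case 0
  then show ?case by (simp add: vp_def)
next
  case (Suc n)
  have hn: "hor M - h = n" using Suc.prems by simp
  have eq: "vp M \<beta> (pi_opt M \<beta>) n (Suc h) = Vn M \<beta> n (Suc h)"
    using Suc by auto
  show ?case
    unfolding vp_Suc[OF assms] eq using pi_opt_prop[OF assms(1), of \<beta> h s] hn by simp
qed

lemma Vstar_eq:
  assumes "valid_mdp M" "\<beta> \<noteq> 0" "h \<le> hor M + 1"
  shows "Vstar M \<beta> h s = Vn M \<beta> (hor M + 1 - h) h s"
proof -
  have "Vstar M \<beta> h s = Sup ((\<lambda>\<pi>. Vpi M \<beta> \<pi> h s) ` policies M)"
    unfolding Vstar_def ..
  also have "\<dots> = Vn M \<beta> (hor M + 1 - h) h s"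
  proof (rule cSup_eq_maximum)
    show "Vn M \<beta> (hor M + 1 - h) h s \<in> (\<lambda>\<pi>. Vpi M \<beta> \<pi> h s) ` policies M"
      using vp_opt[OF assms(1,2), of "hor M + 1 - h" h s] assms(3) pi_opt_pol[OF assms(1)]
      unfolding Vpi_def vp_def[symmetric] by (intro image_eqI[where x="pi_opt M \<beta>"]) auto
    show "\<And>x. x \<in> (\<lambda>\<pi>. Vpi M \<beta> \<pi> h s) ` policies M \<Longrightarrow> x \<le> Vn M \<beta> (hor M + 1 - h) h s"
      using vp_le_Vn[OF assms(1,2)] unfolding Vpi_def vp_def[symmetric] by auto
  qed
  finally show ?thesis .
qed

lemma Vpi_vp: "Vpi M \<beta> \<pi> h s = vp M \<beta> \<pi> (hor M + 1 - h) h s"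
  unfolding Vpi_def vp_def ..

lemma pistar_prop:
  assumes "valid_mdp M" "\<beta> \<noteq> 0"
  shows "pistar M \<beta> \<in> policies M \<and>
     (\<forall>h\<in>{1..hor M}. \<forall>s<nS M. Vpi M \<beta> (pistar M \<beta>) h s = Vstar M \<beta> h s)"
proof -
  have "pi_opt M \<beta> \<in> policies M \<and>
     (\<forall>h\<in>{1..hor M}. \<forall>s<nS M. Vpi M \<beta> (pi_opt M \<beta>) h s = Vstar M \<beta> h s)"
    using pi_opt_pol[OF assms(1)] vp_opt[OF assms] Vstar_eq[OF assms] unfolding Vpi_vp by auto
  then show ?thesis unfolding pistar_def
    by (rule someI[of "\<lambda>\<pi>. \<pi> \<in> policies M \<and> (\<forall>h\<in>{1..hor M}. \<forall>s<nS M. Vpi M \<beta> \<pi> h s = Vstar M \<beta> h s)"])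
qed

lemma Qstar_eq:
  assumes "valid_mdp M" "\<beta> \<noteq> 0" "h \<in> {1..hor M}" "s < nS M" "a < nA M"
  shows "Qstar M \<beta> h s a = Qv M \<beta> (Vn M \<beta> (hor M - h) (Suc h)) h s a"
proof -
  let ?p = "pistar M \<beta>"
  have eq: "Wn M \<beta> ?p (hor M - h) (Suc h) s' = exp (\<beta> * Vn M \<beta> (hor M - h) (Suc h) s')"
    if s': "s' \<in> set_pmf (trans M h s a)" for s'
  proof -
    have s'n: "s' < nS M" by (rule valid_trans[OF assms(1,4,5) s'])
    have "vp M \<beta> ?p (hor M - h) (Suc h) s' = Vn M \<beta> (hor M - h) (Suc h) s'"
    proof (cases "Suc h \<le> hor M")
      case True
      then have "Vpi M \<beta> ?p (Suc h) s' = Vstar M \<beta> (Suc h) s'"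
        using pistar_prop[OF assms(1,2)] s'n by auto
      have T': "Suc h \<le> hor M + 1" using True by simp
      show ?thesis using \<open>Vpi M \<beta> ?p (Suc h) s' = Vstar M \<beta> (Suc h) s'\<close> True
        unfolding Vpi_vp Vstar_eq[OF assms(1,2) T'] by simp
    next
      case False
      then have "hor M - h = 0" using assms(3) by auto
      then show ?thesis by (simp add: vp_def)
    qed
    then show ?thesis using Wn_vp[OF assms(1,2), of ?p "hor M - h" "Suc h" s'] by simp
  qed
  have E: "measure_pmf.expectation (trans M h s a) (\<lambda>s'. Wn M \<beta> ?p (hor M - h) (Suc h) s')
     = measure_pmf.expectation (trans M h s a) (\<lambda>s'. exp (\<beta> * Vn M \<beta> (hor M - h) (Suc h) s'))"
    by (rule pmf_int_cong) (use eq in auto)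
  have pos: "0 < measure_pmf.expectation (trans M h s a) (\<lambda>s'. exp (\<beta> * Vn M \<beta> (hor M - h) (Suc h) s'))"
    by (rule pmf_exp_pos[OF Vn_abs[OF assms(1,2)]])
  show ?thesis
    unfolding Qstar_def Qpi_def E Qv_def using pos assms(2)
    by (simp add: ln_mult field_simps)
qed

section \<open>Performance difference\<close>

lemma pmf_int_bind_fin:
  fixes f :: "'b \<Rightarrow> real"
  assumes fin: "finite (set_pmf (bind_pmf p q))"
  shows "measure_pmf.expectation (bind_pmf p q) f =
         measure_pmf.expectation p (\<lambda>x. measure_pmf.expectation (q x) f)"
proof -
  define B where "B = (\<Sum>y\<in>set_pmf (bind_pmf p q). \<bar>f y\<bar>)"
  have B0: "0 \<le> B" unfolding B_def by (rule sum_nonneg) simp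
  have fb: "\<bar>f y\<bar> \<le> B" if "y \<in> set_pmf (bind_pmf p q)" for y
    unfolding B_def by (rule member_le_sum[OF that _ fin]) simp
  define g where "g y = max (- B) (min B (f y))" for y
  have gb: "\<bar>g y\<bar> \<le> B" for y unfolding g_def using B0 by auto
  have gf: "g y = f y" if "y \<in> set_pmf (bind_pmf p q)" for y
    using fb[OF that] unfolding g_def by auto
  have "measure_pmf.expectation (bind_pmf p q) f = measure_pmf.expectation (bind_pmf p q) g"
    by (rule pmf_int_cong) (use gf in auto)
  also have "\<dots> = measure_pmf.expectation p (\<lambda>x. measure_pmf.expectation (q x) g)"
    by (rule pmf_int_bind_global[OF gb])
  also have "\<dots> = measure_pmf.expectation p (\<lambda>x. measure_pmf.expectation (q x) f)"
  proof (rule pmf_int_cong)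
    fix x assume x: "x \<in> set_pmf p"
    show "measure_pmf.expectation (q x) g = measure_pmf.expectation (q x) f"
      by (rule pmf_int_cong) (use gf x in auto)
  qed
  finally show ?thesis .
qed

lemma gen_traj_supp:
  assumes "valid_mdp M" "\<pi> \<in> policies M"
  shows "s < nS M \<Longrightarrow> finite (set_pmf (gen_traj M \<pi> n h s)) \<and>
    (\<forall>\<tau>\<in>set_pmf (gen_traj M \<pi> n h s). length \<tau> = n \<and>
       (\<forall>i<n. fst (\<tau> ! i) < nS M \<and> snd (\<tau> ! i) = \<pi> (h + i) (fst (\<tau> ! i))))"
proof (induction n arbitrary: h s)
  case 0
  then show ?case by simp
next
  case (Suc n)
  have a: "\<pi> h s < nA M" using assms(2) unfolding policies_def by auto
  have sub: "set_pmf (trans M h s (\<pi> h s)) \<subseteq> {..<nS M}"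
    using valid_trans[OF assms(1) Suc.prems a] by auto
  have fin1: "finite (set_pmf (trans M h s (\<pi> h s)))" using sub finite_subset by blast
  have IH: "finite (set_pmf (gen_traj M \<pi> n (Suc h) s')) \<and>
    (\<forall>\<tau>\<in>set_pmf (gen_traj M \<pi> n (Suc h) s'). length \<tau> = n \<and>
       (\<forall>i<n. fst (\<tau> ! i) < nS M \<and> snd (\<tau> ! i) = \<pi> (Suc h + i) (fst (\<tau> ! i))))"
    if "s' \<in> set_pmf (trans M h s (\<pi> h s))" for s'
    using Suc.IH[of s' "Suc h"] sub that by auto
  have part2: "length \<tau> = Suc n \<and> (\<forall>i<Suc n. fst (\<tau> ! i) < nS M \<and> snd (\<tau> ! i) = \<pi> (h + i) (fst (\<tau> ! i)))"
    if "\<tau> \<in> set_pmf (gen_traj M \<pi> (Suc n) h s)" for \<tau>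
  proof -
    from that obtain s' rest where s': "s' \<in> set_pmf (trans M h s (\<pi> h s))"
      and r: "rest \<in> set_pmf (gen_traj M \<pi> n (Suc h) s')" and t: "\<tau> = (s, \<pi> h s) # rest"
      by auto
    have "fst (\<tau> ! i) < nS M \<and> snd (\<tau> ! i) = \<pi> (h + i) (fst (\<tau> ! i))" if i: "i < Suc n" for i
    proof (cases i)
      case 0
      then show ?thesis using t Suc.prems by simp
    next
      case (Suc j)
      then show ?thesis using IH[OF s'] r t i by auto
    qed
    moreover have "length \<tau> = Suc n" using IH[OF s'] r t by auto
    ultimately show ?thesis by blast
  qed
  have "finite (set_pmf (gen_traj M \<pi> (Suc n) h s))"
    using fin1 IH by auto
  then show ?case using part2 by blast
qed

definition Uf :: "mdp \<Rightarrow> real \<Rightarrow> nat \<Rightarrow> nat \<Rightarrow> real" where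
  "Uf M \<beta> h s = exp (\<beta> * Vn M \<beta> (hor M + 1 - h) h s)"

definition QUf :: "mdp \<Rightarrow> real \<Rightarrow> nat \<Rightarrow> nat \<Rightarrow> nat \<Rightarrow> real" where
  "QUf M \<beta> h s a = exp (\<beta> * Qv M \<beta> (Vn M \<beta> (hor M - h) (Suc h)) h s a)"

primrec gsum :: "mdp \<Rightarrow> real \<Rightarrow> nat \<Rightarrow> traj \<Rightarrow> real" where
  "gsum M \<beta> h [] = 0"
| "gsum M \<beta> h (x # xs) = (Uf M \<beta> h (fst x) - QUf M \<beta> h (fst x) (snd x)) +
     exp (\<beta> * rew M h (fst x) (snd x)) * gsum M \<beta> (Suc h) xs"

lemma Wn_abs: "valid_mdp M \<Longrightarrow> \<beta> \<noteq> 0 \<Longrightarrow> \<bar>Wn M \<beta> \<pi> n h s\<bar> \<le> exp (\<bar>\<beta>\<bar> * real n)"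
  using Wn_vp[of M \<beta> \<pi> n h s] exp_bdd(1)[of "vp M \<beta> \<pi> n h s" "real n" \<beta>] by auto

lemma perf_diff:
  assumes "valid_mdp M" "\<beta> \<noteq> 0" "\<pi> \<in> policies M"
  shows "s < nS M \<Longrightarrow> n + h = hor M + 1 \<Longrightarrow>
    Uf M \<beta> h s - Wn M \<beta> \<pi> n h s = measure_pmf.expectation (gen_traj M \<pi> n h s) (gsum M \<beta> h)"
proof (induction n arbitrary: h s)
  case 0
  then show ?case by (simp add: Uf_def)
next
  case (Suc n)
  define a where "a = \<pi> h s"
  define p where "p = trans M h s a"
  define D where "D = Uf M \<beta> h s - QUf M \<beta> h s a"
  define e where "e = exp (\<beta> * rew M h s a)"
  have a: "a < nA M" using assms(3) unfolding policies_def a_def by auto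
  have hn: "hor M - h = n" "hor M + 1 - Suc h = n" using Suc.prems by auto
  have sp: "s' < nS M" if "s' \<in> set_pmf p" for s'
    using valid_trans[OF assms(1) Suc.prems(1) a] that unfolding p_def by auto
  have fin: "finite (set_pmf (gen_traj M \<pi> n (Suc h) s'))" if "s' \<in> set_pmf p" for s'
    using gen_traj_supp[OF assms(1,3) sp[OF that]] by blast
  have finS: "finite (set_pmf (gen_traj M \<pi> (Suc n) h s))"
    using gen_traj_supp[OF assms(1,3) Suc.prems(1)] by blast
  have inner: "measure_pmf.expectation (gen_traj M \<pi> n (Suc h) s') (\<lambda>rest. gsum M \<beta> h ((s, a) # rest))
      = D + e * (Uf M \<beta> (Suc h) s' - Wn M \<beta> \<pi> n (Suc h) s')" if s': "s' \<in> set_pmf p" for s'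
  proof -
    have I: "integrable (measure_pmf (gen_traj M \<pi> n (Suc h) s')) (gsum M \<beta> (Suc h))"
      by (rule integrable_measure_pmf_finite[OF fin[OF s']])
    have "measure_pmf.expectation (gen_traj M \<pi> n (Suc h) s') (\<lambda>rest. gsum M \<beta> h ((s, a) # rest))
       = measure_pmf.expectation (gen_traj M \<pi> n (Suc h) s') (\<lambda>rest. D + e * gsum M \<beta> (Suc h) rest)"
      by (simp add: D_def e_def)
    also have "\<dots> = D + e * measure_pmf.expectation (gen_traj M \<pi> n (Suc h) s') (gsum M \<beta> (Suc h))"
      using I by simp
    also have "\<dots> = D + e * (Uf M \<beta> (Suc h) s' - Wn M \<beta> \<pi> n (Suc h) s')"
      using Suc.IH[OF sp[OF s']] Suc.prems(2) by simp
    finally show ?thesis .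
  qed
  have Ub: "\<bar>Uf M \<beta> (Suc h) x\<bar> \<le> exp (\<bar>\<beta>\<bar> * real n)" for x
    unfolding Uf_def hn by (rule exp_bdd(1)[OF Vn_abs[OF assms(1,2)]])
  have IU: "integrable (measure_pmf p) (Uf M \<beta> (Suc h))" by (rule pmf_int_bdd[OF Ub])
  have IW: "integrable (measure_pmf p) (Wn M \<beta> \<pi> n (Suc h))" by (rule pmf_int_bdd[OF Wn_abs[OF assms(1,2)]])
  have QU: "QUf M \<beta> h s a = e * measure_pmf.expectation p (Uf M \<beta> (Suc h))"
  proof -
    have "(\<lambda>s'. exp (\<beta> * Vn M \<beta> n (Suc h) s')) = Uf M \<beta> (Suc h)"
      unfolding Uf_def hn ..
    then show ?thesis
      unfolding QUf_def hn exp_Qv[OF Vn_abs[OF assms(1,2)]] e_def p_def by simp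
  qed
  have WS: "Wn M \<beta> \<pi> (Suc n) h s = e * measure_pmf.expectation p (Wn M \<beta> \<pi> n (Suc h))"
    unfolding e_def p_def a_def by simp
  have gt: "gen_traj M \<pi> (Suc n) h s = bind_pmf p (\<lambda>s'. map_pmf (\<lambda>rest. (s, a) # rest) (gen_traj M \<pi> n (Suc h) s'))"
    unfolding p_def a_def by simp
  have "measure_pmf.expectation (gen_traj M \<pi> (Suc n) h s) (gsum M \<beta> h)
     = measure_pmf.expectation p (\<lambda>s'. measure_pmf.expectation (gen_traj M \<pi> n (Suc h) s') (\<lambda>rest. gsum M \<beta> h ((s, a) # rest)))"
    using finS unfolding gt by (simp add: pmf_int_bind_fin)
  also have "\<dots> = measure_pmf.expectation p (\<lambda>s'. D + e * (Uf M \<beta> (Suc h) s' - Wn M \<beta> \<pi> n (Suc h) s'))"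
    by (rule pmf_int_cong) (use inner in auto)
  also have "\<dots> = D + e * measure_pmf.expectation p (Uf M \<beta> (Suc h)) - e * measure_pmf.expectation p (Wn M \<beta> \<pi> n (Suc h))"
    using IU IW by (simp add: algebra_simps)
  also have "\<dots> = Uf M \<beta> h s - Wn M \<beta> \<pi> (Suc n) h s"
    unfolding D_def QU[symmetric] WS by simp
  finally show ?case by simp
qed

lemma key_ineq:
  fixes v w \<beta> :: real
  assumes "w \<le> v" "0 \<le> w" "v \<le> real H" "\<beta> \<noteq> 0"
  shows "v - w \<le> psi \<beta> H * (exp (\<beta> * v) - exp (\<beta> * w))"
proof (cases "\<beta> > 0")
  case True
  define d where "d = v - w"
  have d0: "0 \<le> d" using assms unfolding d_def by simp
  have e1: "\<beta> * d \<le> exp (\<beta> * d) - 1" using exp_ge_add_one_self[of "\<beta> * d"] by linarith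
  have w1: "1 \<le> exp (\<beta> * w)" using True assms(2) by simp
  have nn: "0 \<le> exp (\<beta> * d) - 1" using True d0 by simp
  have "exp (\<beta> * v) - exp (\<beta> * w) = exp (\<beta> * w) * (exp (\<beta> * d) - 1)"
    unfolding d_def by (simp add: algebra_simps flip: exp_add)
  also have "\<dots> \<ge> 1 * (exp (\<beta> * d) - 1)"
    by (rule mult_right_mono[OF w1 nn])
  finally have "\<beta> * d \<le> exp (\<beta> * v) - exp (\<beta> * w)" using e1 by simp
  then have "d \<le> (exp (\<beta> * v) - exp (\<beta> * w)) / \<beta>" using True by (simp add: field_simps)
  then show ?thesis unfolding psi_def d_def using True by simp
next
  case False
  then have bneg: "\<beta> < 0" using assms(4) by simp
  define b where "b = - \<beta>"
  have b0: "0 < b" using bneg unfolding b_def by simp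
  define d where "d = v - w"
  have d0: "0 \<le> d" using assms unfolding d_def by simp
  have e1: "b * d \<le> exp (b * d) - 1" using exp_ge_add_one_self[of "b * d"] by linarith
  have nn: "0 \<le> b * d" using b0 d0 by simp
  have "exp (- (b * w)) - exp (- (b * v)) = exp (- (b * v)) * (exp (b * d) - 1)"
    unfolding d_def by (simp add: algebra_simps flip: exp_add)
  also have "\<dots> \<ge> exp (- (b * v)) * (b * d)"
    by (rule mult_left_mono[OF e1]) simp
  finally have A: "exp (- (b * v)) * (b * d) \<le> exp (- (b * w)) - exp (- (b * v))" .
  have "1 \<le> exp (b * real H) * exp (- (b * v))"
    unfolding exp_add[symmetric] using b0 assms(3) by (simp add: algebra_simps mult_left_mono)
  then have "b * d \<le> exp (b * real H) * exp (- (b * v)) * (b * d)"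
    using nn by (metis mult_1 mult_right_mono)
  also have "\<dots> \<le> exp (b * real H) * (exp (- (b * w)) - exp (- (b * v)))"
    using A by (simp add: mult.assoc)
  finally have "d \<le> exp (b * real H) * (exp (- (b * w)) - exp (- (b * v))) / b"
    using b0 by (simp add: field_simps)
  then show ?thesis unfolding psi_def d_def using bneg b_def by (simp add: field_simps)
qed

lemma term_bound:
  fixes c q v \<beta> :: real
  assumes "0 \<le> c" "c \<le> real h - 1" "0 \<le> q" "q \<le> v" "v \<le> real H + 1 - real h"
    "1 \<le> h" "h \<le> H" "\<beta> \<noteq> 0"
  shows "0 \<le> psi \<beta> H * exp (\<beta> * c) * (exp (\<beta> * v) - exp (\<beta> * q))"
    and "psi \<beta> H * exp (\<beta> * c) * (exp (\<beta> * v) - exp (\<beta> * q)) \<le> (exp (\<bar>\<beta>\<bar> * real H) - 1) / \<bar>\<beta>\<bar>"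
proof -
  have "0 \<le> psi \<beta> H * exp (\<beta> * c) * (exp (\<beta> * v) - exp (\<beta> * q)) \<and>
     psi \<beta> H * exp (\<beta> * c) * (exp (\<beta> * v) - exp (\<beta> * q)) \<le> (exp (\<bar>\<beta>\<bar> * real H) - 1) / \<bar>\<beta>\<bar>"
  proof (cases "\<beta> > 0")
    case True
    have qv: "exp (\<beta> * q) \<le> exp (\<beta> * v)" using True assms(4) by (simp add: mult_left_mono)
    have q1: "1 \<le> exp (\<beta> * q)" using True assms(3) by simp
    have c1: "exp (\<beta> * c) \<le> exp (\<beta> * (real h - 1))" using True assms(2) by (simp add: mult_left_mono)
    have v1: "exp (\<beta> * v) \<le> exp (\<beta> * (real H + 1 - real h))" using True assms(5) by (simp add: mult_left_mono)
    have "exp (\<beta> * c) * (exp (\<beta> * v) - exp (\<beta> * q)) \<le> exp (\<beta> * c) * (exp (\<beta> * v) - 1)"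
      using q1 by (simp add: mult_left_mono)
    also have "\<dots> \<le> exp (\<beta> * (real h - 1)) * (exp (\<beta> * (real H + 1 - real h)) - 1)"
      by (rule mult_mono[OF c1]) (use v1 qv q1 in auto)
    also have "\<dots> = exp (\<beta> * real H) - exp (\<beta> * (real h - 1))"
      by (simp add: algebra_simps flip: exp_add)
    also have "\<dots> \<le> exp (\<beta> * real H) - 1" using True assms(6) by simp
    finally have U: "exp (\<beta> * c) * (exp (\<beta> * v) - exp (\<beta> * q)) \<le> exp (\<beta> * real H) - 1" .
    have N: "0 \<le> exp (\<beta> * c) * (exp (\<beta> * v) - exp (\<beta> * q))" using qv by simp
    show ?thesis using True U N unfolding psi_def
      by (auto simp: divide_right_mono mult.assoc)
  next
    case False
    then have bneg: "\<beta> < 0" using assms(8) by simp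
    define b where "b = - \<beta>"
    have b0: "0 < b" using bneg unfolding b_def by simp
    have be: "\<beta> = - b" unfolding b_def by simp
    have qv: "exp (- (b * v)) \<le> exp (- (b * q))" using b0 assms(4) by (simp add: mult_left_mono)
    have q1: "exp (- (b * q)) \<le> 1" using b0 assms(3) by simp
    have c1: "exp (- (b * c)) \<le> 1" using b0 assms(1) by simp
    have "v \<le> real H" using assms(5,6) by simp
    then have v1: "exp (- (b * real H)) \<le> exp (- (b * v))" using b0 by (simp add: mult_left_mono)
    have N: "0 \<le> exp (- (b * q)) - exp (- (b * v))" using qv by simp
    have "exp (- (b * c)) * (exp (- (b * q)) - exp (- (b * v))) \<le> 1 * (1 - exp (- (b * real H)))"
      by (rule mult_mono) (use c1 q1 v1 N in linarith)+
    then have "exp (b * real H) * (exp (- (b * c)) * (exp (- (b * q)) - exp (- (b * v))))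
       \<le> exp (b * real H) * (1 - exp (- (b * real H)))"
      by (simp add: mult_left_mono)
    also have "\<dots> = exp (b * real H) - 1" by (simp add: algebra_simps flip: exp_add)
    finally have U: "exp (b * real H) * (exp (- (b * c)) * (exp (- (b * q)) - exp (- (b * v)))) \<le> exp (b * real H) - 1" .
    have N2: "0 \<le> exp (b * real H) * (exp (- (b * c)) * (exp (- (b * q)) - exp (- (b * v))))"
      using N by simp
    have eq: "psi \<beta> H * exp (\<beta> * c) * (exp (\<beta> * v) - exp (\<beta> * q))
       = exp (b * real H) * (exp (- (b * c)) * (exp (- (b * q)) - exp (- (b * v)))) / b"
      unfolding psi_def using bneg b0 be by (simp add: field_simps)
    have ab: "\<bar>\<beta>\<bar> = b" using bneg b_def by simp
    show ?thesis unfolding eq ab using U N2 b0 by (simp add: divide_right_mono)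
  qed
  then show "0 \<le> psi \<beta> H * exp (\<beta> * c) * (exp (\<beta> * v) - exp (\<beta> * q))"
    and "psi \<beta> H * exp (\<beta> * c) * (exp (\<beta> * v) - exp (\<beta> * q)) \<le> (exp (\<bar>\<beta>\<bar> * real H) - 1) / \<bar>\<beta>\<bar>"
    by auto
qed

section \<open>Episode gap sums\<close>

lemma gsum_unroll:
  "gsum M \<beta> h0 \<tau> = (\<Sum>j<length \<tau>. exp (\<beta> * (\<Sum>i<j. rew M (h0 + i) (fst (\<tau> ! i)) (snd (\<tau> ! i)))) *
      (Uf M \<beta> (h0 + j) (fst (\<tau> ! j)) - QUf M \<beta> (h0 + j) (fst (\<tau> ! j)) (snd (\<tau> ! j))))"
proof (induction \<tau> arbitrary: h0)
  case Nil
  then show ?case by simp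
next
  case (Cons x xs)
  have inner: "(\<Sum>i<Suc j. rew M (h0 + i) (fst ((x # xs) ! i)) (snd ((x # xs) ! i)))
      = rew M h0 (fst x) (snd x) + (\<Sum>i<j. rew M (Suc h0 + i) (fst (xs ! i)) (snd (xs ! i)))" for j
    by (subst sum.lessThan_Suc_shift) simp
  have "(\<Sum>j<length (x # xs). exp (\<beta> * (\<Sum>i<j. rew M (h0 + i) (fst ((x # xs) ! i)) (snd ((x # xs) ! i)))) *
      (Uf M \<beta> (h0 + j) (fst ((x # xs) ! j)) - QUf M \<beta> (h0 + j) (fst ((x # xs) ! j)) (snd ((x # xs) ! j))))
    = (Uf M \<beta> h0 (fst x) - QUf M \<beta> h0 (fst x) (snd x)) +
      (\<Sum>j<length xs. exp (\<beta> * (\<Sum>i<Suc j. rew M (h0 + i) (fst ((x # xs) ! i)) (snd ((x # xs) ! i)))) *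
      (Uf M \<beta> (Suc h0 + j) (fst (xs ! j)) - QUf M \<beta> (Suc h0 + j) (fst (xs ! j)) (snd (xs ! j))))"
    by (simp only: length_Cons sum.lessThan_Suc_shift) simp
  also have "\<dots> = (Uf M \<beta> h0 (fst x) - QUf M \<beta> h0 (fst x) (snd x)) +
      exp (\<beta> * rew M h0 (fst x) (snd x)) *
      (\<Sum>j<length xs. exp (\<beta> * (\<Sum>i<j. rew M (Suc h0 + i) (fst (xs ! i)) (snd (xs ! i)))) *
      (Uf M \<beta> (Suc h0 + j) (fst (xs ! j)) - QUf M \<beta> (Suc h0 + j) (fst (xs ! j)) (snd (xs ! j))))"
    unfolding inner by (simp add: sum_distrib_left distrib_left exp_add mult.assoc)
  also have "\<dots> = gsum M \<beta> h0 (x # xs)"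
    using Cons[of "Suc h0"] by simp
  finally show ?case by simp
qed

lemma sum_1_n: "(\<Sum>k\<in>{1..n}. f k) = (\<Sum>i<n. f (Suc i))"
  by (induction n) (auto simp: atLeastAtMostSuc_conv add.commute)

lemma cumrew_take:
  assumes "j \<le> length \<tau>"
  shows "cumrew M (take j \<tau>) = (\<Sum>i<j. rew M (Suc i) (fst (\<tau> ! i)) (snd (\<tau> ! i)))"
proof -
  have L: "length (take j \<tau>) = j" using assms by simp
  have "cumrew M (take j \<tau>) = (\<Sum>i<j. rew M (Suc i) (fst (take j \<tau> ! (Suc i - 1))) (snd (take j \<tau> ! (Suc i - 1))))"
    unfolding cumrew_def L sum_1_n ..
  also have "\<dots> = (\<Sum>i<j. rew M (Suc i) (fst (take j \<tau> ! i)) (snd (take j \<tau> ! i)))"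
    by simp
  also have "\<dots> = (\<Sum>i<j. rew M (Suc i) (fst (\<tau> ! i)) (snd (\<tau> ! i)))"
    by (rule sum.cong) auto
  finally show ?thesis .
qed

definition Gep :: "mdp \<Rightarrow> real \<Rightarrow> traj \<Rightarrow> real" where
  "Gep M \<beta> \<tau> = (\<Sum>h\<in>{1..hor M}. gap M \<beta> h (fst (\<tau> ! (h - 1))) (snd (\<tau> ! (h - 1))) (take (h - 1) \<tau>))"

lemma gapsum_Gep: "gapsum M \<beta> K hs = (\<Sum>k<K. Gep M \<beta> (hs ! k))"
  unfolding gapsum_def Gep_def ..

definition Bnd :: "mdp \<Rightarrow> real \<Rightarrow> real" where
  "Bnd M \<beta> = real (hor M) * ((exp (\<bar>\<beta>\<bar> * real (hor M)) - 1) / \<bar>\<beta>\<bar>)"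

lemma Gep_props:
  assumes "valid_mdp M" "\<beta> \<noteq> 0" "\<pi> \<in> policies M" "\<tau> \<in> set_pmf (traj_pmf M \<pi>)"
  shows "Gep M \<beta> \<tau> = psi \<beta> (hor M) * gsum M \<beta> 1 \<tau> \<and> 0 \<le> Gep M \<beta> \<tau> \<and> Gep M \<beta> \<tau> \<le> Bnd M \<beta>"
proof -
  let ?H = "hor M"
  have s1: "init M < nS M" using assms(1) unfolding valid_mdp_def by auto
  have supp: "length \<tau> = ?H \<and> (\<forall>i<?H. fst (\<tau> ! i) < nS M \<and> snd (\<tau> ! i) = \<pi> (1 + i) (fst (\<tau> ! i)))"
    using gen_traj_supp[OF assms(1,3) s1, of ?H 1] assms(4) unfolding traj_pmf_def by blast
  define T where "T i = gap M \<beta> (Suc i) (fst (\<tau> ! i)) (snd (\<tau> ! i)) (take i \<tau>)" for i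
  define F where "F j = exp (\<beta> * (\<Sum>i<j. rew M (1 + i) (fst (\<tau> ! i)) (snd (\<tau> ! i)))) *
      (Uf M \<beta> (1 + j) (fst (\<tau> ! j)) - QUf M \<beta> (1 + j) (fst (\<tau> ! j)) (snd (\<tau> ! j)))" for j
  have G1: "Gep M \<beta> \<tau> = (\<Sum>i<?H. T i)"
    unfolding Gep_def sum_1_n T_def by simp
  have TF: "T i = psi \<beta> ?H * F i \<and> 0 \<le> T i \<and> T i \<le> (exp (\<bar>\<beta>\<bar> * real ?H) - 1) / \<bar>\<beta>\<bar>"
    if i: "i < ?H" for i
  proof -
    define s where "s = fst (\<tau> ! i)"
    define a where "a = snd (\<tau> ! i)"
    have sn: "s < nS M" using supp i unfolding s_def by auto
    have an: "a < nA M" using supp i assms(3) unfolding a_def policies_def by auto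
    have hr: "Suc i \<in> {1..?H}" using i by simp
    define c where "c = cumrew M (take i \<tau>)"
    have c: "c = (\<Sum>i'<i. rew M (Suc i') (fst (\<tau> ! i')) (snd (\<tau> ! i')))"
      unfolding c_def by (rule cumrew_take) (use supp i in auto)
    have c0: "0 \<le> c" unfolding c using valid_rew[OF assms(1)] by (auto intro: sum_nonneg)
    have c1: "c \<le> real (Suc i) - 1"
    proof -
      have "c \<le> real (card {..<i}) * 1"
        unfolding c by (rule sum_bounded_above) (use valid_rew[OF assms(1)] in auto)
      then show ?thesis by simp
    qed
    define v where "v = Vn M \<beta> (?H + 1 - Suc i) (Suc i) s"
    define q where "q = Qv M \<beta> (Vn M \<beta> (?H - Suc i) (Suc (Suc i))) (Suc i) s a"
    have VS: "Vstar M \<beta> (Suc i) s = v" unfolding v_def by (rule Vstar_eq[OF assms(1,2)]) (use i in auto)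
    have QS: "Qstar M \<beta> (Suc i) s a = q" unfolding q_def by (rule Qstar_eq[OF assms(1,2) hr sn an])
    have hv: "?H + 1 - Suc i = Suc (?H - Suc i)" using i by simp
    have qv: "q \<le> v" unfolding q_def v_def hv by (rule Qv_le_Vn[OF an])
    have q0: "0 \<le> q" unfolding q_def using Qv_bounds[OF assms(1,2), of "Vn M \<beta> (?H - Suc i) (Suc (Suc i))" "?H - Suc i"]
      Vn_bounds[OF assms(1,2)] by blast
    have v1: "v \<le> real ?H + 1 - real (Suc i)" using Vn_bounds[OF assms(1,2), of "?H + 1 - Suc i" "Suc i" s] i
      unfolding v_def by simp
    have Tq: "T i = psi \<beta> ?H * exp (\<beta> * c) * (exp (\<beta> * v) - exp (\<beta> * q))"
      unfolding T_def gap_def VS QS c_def[symmetric] s_def[symmetric] a_def[symmetric] ..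
    have "F i = exp (\<beta> * c) * (exp (\<beta> * v) - exp (\<beta> * q))"
      unfolding F_def c Uf_def QUf_def v_def q_def s_def a_def by simp
    then have "T i = psi \<beta> ?H * F i" unfolding Tq by simp
    moreover have "0 \<le> T i" "T i \<le> (exp (\<bar>\<beta>\<bar> * real ?H) - 1) / \<bar>\<beta>\<bar>"
      unfolding Tq by (rule term_bound[OF c0 c1 q0 qv v1 _ _ assms(2)]; use i in simp)+
    ultimately show ?thesis by simp
  qed
  have "gsum M \<beta> 1 \<tau> = (\<Sum>i<?H. F i)"
    unfolding gsum_unroll F_def using supp by simp
  then have E: "Gep M \<beta> \<tau> = psi \<beta> ?H * gsum M \<beta> 1 \<tau>"
    unfolding G1 using TF by (simp add: sum_distrib_left)
  have N: "0 \<le> Gep M \<beta> \<tau>" unfolding G1 by (rule sum_nonneg) (meson TF lessThan_iff)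
  have "Gep M \<beta> \<tau> \<le> real (card {..<?H}) * ((exp (\<bar>\<beta>\<bar> * real ?H) - 1) / \<bar>\<beta>\<bar>)"
    unfolding G1 by (rule sum_bounded_above) (meson TF lessThan_iff)
  then have "Gep M \<beta> \<tau> \<le> Bnd M \<beta>" unfolding Bnd_def by simp
  with E N show ?thesis by simp
qed

lemma regret_step:
  assumes "valid_mdp M" "\<beta> \<noteq> 0" "\<pi> \<in> policies M"
  shows "Vstar M \<beta> 1 (init M) - Vpi M \<beta> \<pi> 1 (init M) \<le> measure_pmf.expectation (traj_pmf M \<pi>) (Gep M \<beta>)"
proof -
  let ?H = "hor M"
  have s1: "init M < nS M" using assms(1) unfolding valid_mdp_def by auto
  have fin: "finite (set_pmf (traj_pmf M \<pi>))"
    using gen_traj_supp[OF assms(1,3) s1, of ?H 1] unfolding traj_pmf_def by blast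
  define v where "v = Vn M \<beta> ?H 1 (init M)"
  define w where "w = vp M \<beta> \<pi> ?H 1 (init M)"
  have V: "Vstar M \<beta> 1 (init M) = v" unfolding v_def using Vstar_eq[OF assms(1,2), of 1] by simp
  have W: "Vpi M \<beta> \<pi> 1 (init M) = w" unfolding w_def Vpi_vp by simp
  have wv: "w \<le> v" unfolding v_def w_def by (rule vp_le_Vn[OF assms])
  have w0: "0 \<le> w" unfolding w_def using Wn_vp[OF assms(1,2)] by blast
  have vH: "v \<le> real ?H" unfolding v_def using Vn_bounds[OF assms(1,2)] by blast
  have "v - w \<le> psi \<beta> ?H * (exp (\<beta> * v) - exp (\<beta> * w))" by (rule key_ineq[OF wv w0 vH assms(2)])
  also have "exp (\<beta> * v) - exp (\<beta> * w) = Uf M \<beta> 1 (init M) - Wn M \<beta> \<pi> ?H 1 (init M)"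
    unfolding v_def w_def Uf_def using Wn_vp[OF assms(1,2), of \<pi> ?H 1 "init M"] by simp
  also have "\<dots> = measure_pmf.expectation (traj_pmf M \<pi>) (gsum M \<beta> 1)"
    unfolding traj_pmf_def by (rule perf_diff[OF assms s1]) simp
  also have "psi \<beta> ?H * \<dots> = measure_pmf.expectation (traj_pmf M \<pi>) (\<lambda>\<tau>. psi \<beta> ?H * gsum M \<beta> 1 \<tau>)"
    by simp
  also have "\<dots> = measure_pmf.expectation (traj_pmf M \<pi>) (Gep M \<beta>)"
    by (rule pmf_int_cong) (use Gep_props[OF assms] in auto)
  finally show ?thesis unfolding V W .
qed

section \<open>Concentration\<close>

lemma hist_supp:
  "hs \<in> set_pmf (hist_pmf M alg K) \<Longrightarrow> length hs = K \<and>
     (\<forall>k<K. hs ! k \<in> set_pmf (traj_pmf M (alg (take k hs))))"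
proof (induction K arbitrary: hs)
  case 0
  then show ?case by simp
next
  case (Suc K)
  then obtain hs0 \<tau> where h0: "hs0 \<in> set_pmf (hist_pmf M alg K)" and t: "\<tau> \<in> set_pmf (traj_pmf M (alg hs0))"
    and hs: "hs = hs0 @ [\<tau>]" by auto
  have L: "length hs0 = K" using Suc.IH[OF h0] by simp
  have "hs ! k \<in> set_pmf (traj_pmf M (alg (take k hs)))" if k: "k < Suc K" for k
  proof (cases "k < K")
    case True
    then show ?thesis using Suc.IH[OF h0] L hs by (simp add: nth_append)
  next
    case False
    then have "k = K" using k by simp
    then show ?thesis using t L hs by (auto simp: nth_append)
  qed
  then show ?case using L hs by simp
qed

definition aa :: real where "aa = 1 - exp (- 1)"

lemma aa_bounds: "1 / 2 \<le> aa" "aa \<le> 1"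
proof -
  have "2 \<le> exp (1::real)" using exp_ge_add_one_self[of 1] by simp
  then have "exp (- 1) \<le> (1 / 2 :: real)" by (simp add: exp_minus field_simps)
  then show "1 / 2 \<le> aa" unfolding aa_def by simp
  show "aa \<le> 1" unfolding aa_def by simp
qed

lemma exp_neg_le:
  fixes y :: real
  assumes "0 \<le> y" "y \<le> 1"
  shows "exp (- y) \<le> 1 - aa * y"
proof -
  have "exp ((1 - y) *\<^sub>R 0 + y *\<^sub>R (- 1)) \<le> (1 - y) * exp 0 + y * exp (- 1)"
    by (rule convex_onD[OF exp_convex]) (use assms in auto)
  then show ?thesis unfolding aa_def by (simp add: algebra_simps)
qed

lemma mgf_bound:
  fixes Z :: "'a \<Rightarrow> real"
  assumes "\<And>x. 0 \<le> Z x" "\<And>x. Z x \<le> 1"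
  shows "exp (aa * measure_pmf.expectation p Z) * measure_pmf.expectation p (\<lambda>x. exp (- Z x)) \<le> 1"
proof -
  have bZ: "\<bar>Z x\<bar> \<le> 1" for x using assms[of x] by simp
  have IZ: "integrable (measure_pmf p) Z" by (rule pmf_int_bdd[OF bZ])
  have be: "\<bar>exp (- Z x)\<bar> \<le> 1" for x using assms[of x] by simp
  have Ie: "integrable (measure_pmf p) (\<lambda>x. exp (- Z x))" by (rule pmf_int_bdd[OF be])
  have "measure_pmf.expectation p (\<lambda>x. exp (- Z x)) \<le> measure_pmf.expectation p (\<lambda>x. 1 - aa * Z x)"
    by (rule integral_mono[OF Ie]) (use IZ exp_neg_le assms in auto)
  also have "\<dots> = 1 - aa * measure_pmf.expectation p Z"
    using IZ by simp
  also have "\<dots> \<le> exp (- (aa * measure_pmf.expectation p Z))"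
    using exp_ge_add_one_self[of "- (aa * measure_pmf.expectation p Z)"] by simp
  finally have "measure_pmf.expectation p (\<lambda>x. exp (- Z x)) \<le> exp (- (aa * measure_pmf.expectation p Z))" .
  then have "exp (aa * measure_pmf.expectation p Z) * measure_pmf.expectation p (\<lambda>x. exp (- Z x))
     \<le> exp (aa * measure_pmf.expectation p Z) * exp (- (aa * measure_pmf.expectation p Z))"
    by (simp add: mult_left_mono)
  also have "\<dots> = 1" by (simp flip: exp_add)
  finally show ?thesis .
qed

definition Yc :: "mdp \<Rightarrow> real \<Rightarrow> traj \<Rightarrow> real" where
  "Yc M \<beta> \<tau> = max 0 (min 1 (Gep M \<beta> \<tau> / Bnd M \<beta>))"

definition Ef :: "mdp \<Rightarrow> real \<Rightarrow> (hist \<Rightarrow> policy) \<Rightarrow> hist \<Rightarrow> real" where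
  "Ef M \<beta> alg hs = measure_pmf.expectation (traj_pmf M (alg hs)) (Yc M \<beta>)"

definition Sm :: "mdp \<Rightarrow> real \<Rightarrow> (hist \<Rightarrow> policy) \<Rightarrow> nat \<Rightarrow> hist \<Rightarrow> real" where
  "Sm M \<beta> alg K hs = (\<Sum>k<K. aa * Ef M \<beta> alg (take k hs) - Yc M \<beta> (hs ! k))"

lemma Yc_bounds: "0 \<le> Yc M \<beta> \<tau>" "Yc M \<beta> \<tau> \<le> 1"
  unfolding Yc_def by auto

lemma Ef_bounds: "0 \<le> Ef M \<beta> alg hs" "Ef M \<beta> alg hs \<le> 1"
proof -
  have b: "\<bar>Yc M \<beta> x\<bar> \<le> 1" for x using Yc_bounds[of M \<beta> x] by simp
  show "0 \<le> Ef M \<beta> alg hs" unfolding Ef_def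
    by (rule integral_nonneg_AE) (use Yc_bounds in auto)
  show "Ef M \<beta> alg hs \<le> 1" unfolding Ef_def
    by (rule measure_pmf.integral_le_const[OF pmf_int_bdd[OF b]]) (use Yc_bounds in auto)
qed

lemma Sm_abs: "\<bar>Sm M \<beta> alg K hs\<bar> \<le> 2 * real K"
proof -
  have "\<bar>Sm M \<beta> alg K hs\<bar> \<le> (\<Sum>k<K. \<bar>aa * Ef M \<beta> alg (take k hs) - Yc M \<beta> (hs ! k)\<bar>)"
    unfolding Sm_def by (rule sum_abs)
  also have "\<dots> \<le> (\<Sum>k<K. 2)"
  proof (rule sum_mono)
    fix k
    have e: "0 \<le> aa * Ef M \<beta> alg (take k hs)" "aa * Ef M \<beta> alg (take k hs) \<le> 1"
      using Ef_bounds[of M \<beta> alg "take k hs"] aa_bounds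
        mult_mono[of aa 1 "Ef M \<beta> alg (take k hs)" 1] by auto
    show "\<bar>aa * Ef M \<beta> alg (take k hs) - Yc M \<beta> (hs ! k)\<bar> \<le> 2"
      unfolding abs_le_iff using e Yc_bounds[of M \<beta> "hs ! k"] by linarith
  qed
  finally show ?thesis by simp
qed

lemma supermart:
  "measure_pmf.expectation (hist_pmf M alg K) (\<lambda>hs. exp (Sm M \<beta> alg K hs)) \<le> 1"
proof (induction K)
  case 0
  then show ?case by (simp add: Sm_def)
next
  case (Suc K)
  define g where "g hs = exp (Sm M \<beta> alg K hs) * (exp (aa * Ef M \<beta> alg hs) *
      measure_pmf.expectation (traj_pmf M (alg hs)) (\<lambda>\<tau>. exp (- Yc M \<beta> \<tau>)))" for hs
  have gle: "g hs \<le> exp (Sm M \<beta> alg K hs)" for hs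
  proof -
    have "exp (aa * Ef M \<beta> alg hs) * measure_pmf.expectation (traj_pmf M (alg hs)) (\<lambda>\<tau>. exp (- Yc M \<beta> \<tau>)) \<le> 1"
      unfolding Ef_def by (rule mgf_bound) (use Yc_bounds in auto)
    then show ?thesis unfolding g_def by (simp add: mult_left_le)
  qed
  have g0: "0 \<le> g hs" for hs
  proof -
    have "0 \<le> measure_pmf.expectation (traj_pmf M (alg hs)) (\<lambda>\<tau>. exp (- Yc M \<beta> \<tau>))"
      by (rule integral_nonneg_AE) auto
    then show ?thesis unfolding g_def by simp
  qed
  have bS: "\<bar>exp (Sm M \<beta> alg K hs)\<bar> \<le> exp (2 * real K)" for hs
    using Sm_abs[of M \<beta> alg K hs] by simp
  have bg: "\<bar>g hs\<bar> \<le> exp (2 * real K)" for hs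
  proof -
    have "Sm M \<beta> alg K hs \<le> 2 * real K" using Sm_abs[of M \<beta> alg K hs] by simp
    then have e: "exp (Sm M \<beta> alg K hs) \<le> exp (2 * real K)" by simp
    have "g hs \<le> exp (2 * real K)" by (rule order_trans[OF gle[of hs] e])
    then show ?thesis using g0[of hs] by simp
  qed
  have bS1: "\<bar>exp (Sm M \<beta> alg (Suc K) hs)\<bar> \<le> exp (2 * real (Suc K))" for hs
    using Sm_abs[of M \<beta> alg "Suc K" hs] by simp
  have inner: "measure_pmf.expectation (traj_pmf M (alg hs)) (\<lambda>\<tau>. exp (Sm M \<beta> alg (Suc K) (hs @ [\<tau>]))) = g hs"
    if hs: "hs \<in> set_pmf (hist_pmf M alg K)" for hs
  proof -
    have L: "length hs = K" using hist_supp[OF hs] by simp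
    have S: "Sm M \<beta> alg (Suc K) (hs @ [\<tau>]) = Sm M \<beta> alg K hs + aa * Ef M \<beta> alg hs - Yc M \<beta> \<tau>" for \<tau>
    proof -
      have "Sm M \<beta> alg (Suc K) (hs @ [\<tau>]) = (\<Sum>k<K. aa * Ef M \<beta> alg (take k (hs @ [\<tau>])) - Yc M \<beta> ((hs @ [\<tau>]) ! k))
           + (aa * Ef M \<beta> alg (take K (hs @ [\<tau>])) - Yc M \<beta> ((hs @ [\<tau>]) ! K))"
        unfolding Sm_def by simp
      also have "(\<Sum>k<K. aa * Ef M \<beta> alg (take k (hs @ [\<tau>])) - Yc M \<beta> ((hs @ [\<tau>]) ! k)) = Sm M \<beta> alg K hs"
        unfolding Sm_def by (rule sum.cong) (use L in \<open>auto simp: nth_append\<close>)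
      finally show ?thesis using L by (simp add: nth_append)
    qed
    have "(\<lambda>\<tau>. exp (Sm M \<beta> alg (Suc K) (hs @ [\<tau>]))) =
       (\<lambda>\<tau>. (exp (Sm M \<beta> alg K hs) * exp (aa * Ef M \<beta> alg hs)) * exp (- Yc M \<beta> \<tau>))"
      unfolding S by (simp add: exp_add exp_diff exp_minus field_simps)
    then show ?thesis unfolding g_def by (simp add: mult.assoc)
  qed
  have "measure_pmf.expectation (hist_pmf M alg (Suc K)) (\<lambda>hs. exp (Sm M \<beta> alg (Suc K) hs))
     = measure_pmf.expectation (hist_pmf M alg K)
         (\<lambda>hs. measure_pmf.expectation (traj_pmf M (alg hs)) (\<lambda>\<tau>. exp (Sm M \<beta> alg (Suc K) (hs @ [\<tau>]))))"
    by (simp add: pmf_int_bind_global[OF bS1])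
  also have "\<dots> = measure_pmf.expectation (hist_pmf M alg K) g"
    by (rule pmf_int_cong) (use inner in auto)
  also have "\<dots> \<le> measure_pmf.expectation (hist_pmf M alg K) (\<lambda>hs. exp (Sm M \<beta> alg K hs))"
    by (rule integral_mono[OF pmf_int_bdd[OF bg] pmf_int_bdd[OF bS] gle])
  also have "\<dots> \<le> 1" by (rule Suc.IH)
  finally show ?case .
qed

lemma markov_Sm:
  assumes "0 < \<delta>"
  shows "measure_pmf.prob (hist_pmf M alg K) {hs. ln (2 / \<delta>) \<le> Sm M \<beta> alg K hs} \<le> \<delta> / 2"
proof -
  let ?p = "hist_pmf M alg K"
  have bS: "\<bar>exp (Sm M \<beta> alg K hs)\<bar> \<le> exp (2 * real K)" for hs
    using Sm_abs[of M \<beta> alg K hs] by simp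
  have eq: "{hs. ln (2 / \<delta>) \<le> Sm M \<beta> alg K hs} = {hs \<in> space (measure_pmf ?p). 2 / \<delta> \<le> exp (Sm M \<beta> alg K hs)}"
  proof -
    have "(ln (2 / \<delta>) \<le> x) = (2 / \<delta> \<le> exp x)" for x
      using assms by (metis divide_pos_pos exp_le_cancel_iff exp_ln zero_less_numeral)
    then show ?thesis by auto
  qed
  have "measure_pmf.prob ?p {hs \<in> space (measure_pmf ?p). 2 / \<delta> \<le> exp (Sm M \<beta> alg K hs)}
      \<le> measure_pmf.expectation ?p (\<lambda>hs. exp (Sm M \<beta> alg K hs)) / (2 / \<delta>)"
    by (rule integral_Markov_inequality_measure[OF pmf_int_bdd[OF bS]]) (use assms in auto)
  also have "\<dots> \<le> 1 / (2 / \<delta>)"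
    by (rule divide_right_mono[OF supermart]) (use assms in simp)
  finally show ?thesis unfolding eq by simp
qed

lemma ln_lower: "0 < x \<Longrightarrow> 1 - 1 / x \<le> ln (x::real)"
  using ln_le_minus_one[of "1 / x"] by (simp add: ln_div)

lemma log_ineq:
  fixes \<delta> :: real
  assumes "0 < \<delta>" "\<delta> \<le> 1" "3 \<le> K"
  shows "ln (2 / \<delta>) \<le> 13 * ln (ln (real K) / \<delta>)"
proof -
  have l3: "109 / 100 \<le> ln (3::real)"
  proof -
    have "ln (3::real) = ln ((272 / 100) * (300 / 272))" by simp
    also have "\<dots> = ln (272 / 100) + ln (300 / 272)" by (rule ln_mult_pos) simp_all
    finally have "ln (3::real) = ln (272 / 100) + ln (300 / 272)" .
    moreover have "1 - 1 / (300 / 272) \<le> ln (300 / 272 :: real)" by (rule ln_lower) simp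
    ultimately show ?thesis using ln_272_gt_1 by simp
  qed
  have "ln 3 \<le> ln (real K)" using assms(3) by simp
  then have lk: "109 / 100 \<le> ln (real K)" using l3 by simp
  have "ln (109 / 100) \<le> ln (ln (real K))" using lk by simp
  moreover have "1 - 1 / (109 / 100) \<le> ln (109 / 100 :: real)" by (rule ln_lower) simp
  ultimately have llk: "9 / 109 \<le> ln (ln (real K))" by simp
  have ld: "ln \<delta> \<le> 0" using assms by simp
  have e1: "ln (2 / \<delta>) = ln 2 - ln \<delta>" using assms by (simp add: ln_div)
  have e2: "ln (ln (real K) / \<delta>) = ln (ln (real K)) - ln \<delta>" using assms lk by (simp add: ln_div)
  have m: "13 * (ln (ln (real K)) - ln \<delta>) = 13 * ln (ln (real K)) - 13 * ln \<delta>" by (simp add: algebra_simps)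
  have l2: "ln (2::real) < 1" by (rule ln_2_less_1)
  have "1 \<le> 13 * ln (ln (real K))" using llk by simp
  then show ?thesis unfolding e1 e2 m using l2 ld by linarith
qed

lemma Bnd_pos: "valid_mdp M \<Longrightarrow> \<beta> \<noteq> 0 \<Longrightarrow> 0 < Bnd M \<beta>"
proof -
  assume v: "valid_mdp M" and b: "\<beta> \<noteq> 0"
  have H: "1 \<le> hor M" using v unfolding valid_mdp_def by auto
  have "0 < \<bar>\<beta>\<bar> * real (hor M)" using H b by simp
  then have "1 < exp (\<bar>\<beta>\<bar> * real (hor M))" by simp
  then show ?thesis unfolding Bnd_def using H b by simp
qed

lemma det_bound:
  assumes v: "valid_mdp M" and b: "\<beta> \<noteq> 0" and pol: "\<And>hs. alg hs \<in> policies M"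
    and d: "0 < \<delta>" "\<delta> \<le> 1" and K: "3 \<le> K"
    and hs: "hs \<in> set_pmf (hist_pmf M alg K)" and S: "Sm M \<beta> alg K hs < ln (2 / \<delta>)"
  shows "hs \<in> regret_bound_event M \<beta> 26 K \<delta> alg"
proof -
  let ?B = "Bnd M \<beta>"
  have B0: "0 < ?B" by (rule Bnd_pos[OF v b])
  have L: "length hs = K" and sup: "\<And>k. k < K \<Longrightarrow> hs ! k \<in> set_pmf (traj_pmf M (alg (take k hs)))"
    using hist_supp[OF hs] by auto
  have GY: "Gep M \<beta> \<tau> = ?B * Yc M \<beta> \<tau>" if "\<tau> \<in> set_pmf (traj_pmf M \<pi>)" "\<pi> \<in> policies M" for \<tau> \<pi>
  proof -
    have g: "0 \<le> Gep M \<beta> \<tau>" "Gep M \<beta> \<tau> \<le> ?B" using Gep_props[OF v b that(2,1)] by auto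
    then have "Gep M \<beta> \<tau> / ?B \<le> 1" using B0 by simp
    moreover have "0 \<le> Gep M \<beta> \<tau> / ?B" using g B0 by simp
    ultimately have "Yc M \<beta> \<tau> = Gep M \<beta> \<tau> / ?B" unfolding Yc_def by simp
    then show ?thesis using B0 by simp
  qed
  have rk: "Vstar M \<beta> 1 (init M) - Vpi M \<beta> (alg (take k hs)) 1 (init M) \<le> ?B * Ef M \<beta> alg (take k hs)" for k
  proof -
    have "Vstar M \<beta> 1 (init M) - Vpi M \<beta> (alg (take k hs)) 1 (init M)
       \<le> measure_pmf.expectation (traj_pmf M (alg (take k hs))) (Gep M \<beta>)"
      by (rule regret_step[OF v b pol])
    also have "\<dots> = measure_pmf.expectation (traj_pmf M (alg (take k hs))) (\<lambda>\<tau>. ?B * Yc M \<beta> \<tau>)"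
      by (rule pmf_int_cong) (use GY pol in auto)
    also have "\<dots> = ?B * Ef M \<beta> alg (take k hs)" unfolding Ef_def by simp
    finally show ?thesis .
  qed
  define SE where "SE = (\<Sum>k<K. Ef M \<beta> alg (take k hs))"
  define SY where "SY = (\<Sum>k<K. Yc M \<beta> (hs ! k))"
  have SE0: "0 \<le> SE" unfolding SE_def by (rule sum_nonneg) (use Ef_bounds in auto)
  have SY0: "0 \<le> SY" unfolding SY_def by (rule sum_nonneg) (use Yc_bounds in auto)
  have reg: "regret M \<beta> alg K hs \<le> ?B * SE"
    unfolding regret_def SE_def sum_distrib_left by (rule sum_mono) (rule rk)
  have gs: "gapsum M \<beta> K hs = ?B * SY"
    unfolding gapsum_Gep SY_def sum_distrib_left by (rule sum.cong) (use GY sup pol in auto)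
  have "Sm M \<beta> alg K hs = aa * SE - SY"
    unfolding Sm_def SE_def SY_def by (simp add: sum_subtractf sum_distrib_left)
  then have "aa * SE < SY + ln (2 / \<delta>)" using S by simp
  moreover have "SE \<le> 2 * (aa * SE)"
  proof -
    have "1 * SE \<le> (2 * aa) * SE" by (rule mult_right_mono) (use aa_bounds SE0 in auto)
    then show ?thesis by simp
  qed
  ultimately have "SE \<le> 2 * (SY + ln (2 / \<delta>))" by simp
  then have "regret M \<beta> alg K hs \<le> ?B * (2 * (SY + ln (2 / \<delta>)))"
    using reg B0 by (meson mult_left_mono less_le order_trans)
  also have "\<dots> = 2 * gapsum M \<beta> K hs + 2 * ?B * ln (2 / \<delta>)"
    unfolding gs by (simp add: algebra_simps)
  also have "\<dots> \<le> 26 * gapsum M \<beta> K hs + ?B * (26 * ln (ln (real K) / \<delta>))"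
  proof -
    have "2 * ln (2 / \<delta>) \<le> 26 * ln (ln (real K) / \<delta>)" using log_ineq[OF d K] by simp
    then have "?B * (2 * ln (2 / \<delta>)) \<le> ?B * (26 * ln (ln (real K) / \<delta>))"
      using B0 by (simp add: mult_left_mono)
    moreover have "0 \<le> gapsum M \<beta> K hs" unfolding gs using B0 SY0 by simp
    ultimately show ?thesis by (simp add: mult.assoc mult.left_commute)
  qed
  also have "\<dots> = 26 * (gapsum M \<beta> K hs + (exp (\<bar>\<beta>\<bar> * real (hor M)) - 1) / \<bar>\<beta>\<bar> * real (hor M) * ln (ln (real K) / \<delta>))"
    unfolding Bnd_def by (simp add: algebra_simps)
  finally show ?thesis unfolding regret_bound_event_def by simp
qed

lemma main_generic:
  assumes v: "valid_mdp M" and b: "\<beta> \<noteq> 0" and pol: "\<And>hs. alg hs \<in> policies M"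
    and d: "0 < \<delta>" "\<delta> \<le> 1" and K: "3 \<le> K"
  shows "1 - \<delta> / 2 \<le> measure_pmf.prob (hist_pmf M alg K) (regret_bound_event M \<beta> 26 K \<delta> alg)"
proof -
  let ?p = "hist_pmf M alg K"
  let ?A = "{hs. ln (2 / \<delta>) \<le> Sm M \<beta> alg K hs}"
  have "measure_pmf.prob ?p (space (measure_pmf ?p) - ?A) \<le> measure_pmf.prob ?p (regret_bound_event M \<beta> 26 K \<delta> alg)"
    by (rule measure_pmf.finite_measure_mono_AE)
       (use det_bound[OF v b pol d K] in \<open>auto simp: AE_measure_pmf_iff not_le\<close>)
  moreover have "measure_pmf.prob ?p (space (measure_pmf ?p) - ?A) = 1 - measure_pmf.prob ?p ?A"
    by (rule measure_pmf.prob_compl) simp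
  moreover have "measure_pmf.prob ?p ?A \<le> \<delta> / 2" by (rule markov_Sm[OF d(1)])
  ultimately show ?thesis by simp
qed

theorem lemma1:
  shows "\<exists>C>0. \<forall>M \<beta> \<delta> c K sel.
    valid_mdp M \<and> \<beta> \<noteq> 0 \<and> 0 < \<delta> \<and> \<delta> \<le> 1 \<and> c > 0 \<and> K \<ge> 3 \<and> argmax_sel (nA M) sel \<longrightarrow>
      measure_pmf.prob (hist_pmf M (RSVI2 sel M \<beta> c K \<delta>) K)
         (regret_bound_event M \<beta> C K \<delta> (RSVI2 sel M \<beta> c K \<delta>)) \<ge> 1 - \<delta> / 2 \<and>
      measure_pmf.prob (hist_pmf M (RSQ2 sel M \<beta> c K \<delta>) K)
         (regret_bound_event M \<beta> C K \<delta> (RSQ2 sel M \<beta> c K \<delta>)) \<ge> 1 - \<delta> / 2"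
proof (intro exI[of _ 26] conjI allI impI)
  show "(0::real) < 26" by simp
next
  fix M :: mdp and \<beta> \<delta> c :: real and K :: nat and sel :: "(nat \<Rightarrow> real) \<Rightarrow> nat"
  assume as: "valid_mdp M \<and> \<beta> \<noteq> 0 \<and> 0 < \<delta> \<and> \<delta> \<le> 1 \<and> c > (0::real) \<and> K \<ge> 3 \<and> argmax_sel (nA M) sel"
  then have sel: "\<And>f. sel f < nA M" unfolding argmax_sel_def by blast
  have p1: "RSVI2 sel M \<beta> c K \<delta> hs \<in> policies M" for hs
    unfolding policies_def RSVI2_def using sel by simp
  have p2: "RSQ2 sel M \<beta> c K \<delta> hs \<in> policies M" for hs
    unfolding policies_def RSQ2_def using sel by (simp split: prod.splits)
  show "measure_pmf.prob (hist_pmf M (RSVI2 sel M \<beta> c K \<delta>) K)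
         (regret_bound_event M \<beta> 26 K \<delta> (RSVI2 sel M \<beta> c K \<delta>)) \<ge> 1 - \<delta> / 2"
    using main_generic[of M \<beta> "RSVI2 sel M \<beta> c K \<delta>" \<delta> K] as p1 by simp
  show "measure_pmf.prob (hist_pmf M (RSQ2 sel M \<beta> c K \<delta>) K)
         (regret_bound_event M \<beta> 26 K \<delta> (RSQ2 sel M \<beta> c K \<delta>)) \<ge> 1 - \<delta> / 2"
    using main_generic[of M \<beta> "RSQ2 sel M \<beta> c K \<delta>" \<delta> K] as p2 by simp
qed

end
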